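(* Let $\Delta$ be a finite set of quantifier-free insertion queries over the graph schema $\{E\}$. Then $(q_{\mathrm{Reach}},\Delta\cup\Delta_E)$ can be maintained in DynFO for directed acyclic graphs. Furthermore, this can be done by a program such that for every quantifier-free insertion query $\rho(\bar p)$ in $\Delta$ there is a first-order formula $\gamma_\rho(\bar p)$ over the input and auxiliary schema (a guard) such that in every state reached for an acyclic graph $G$ and every tuple $\bar a$, $\gamma_\rho(\bar a)$ holds if and only if $\rho(\bar a)(G)$ contains a cycle.
   Context: Framework. A schema $\tau$ consists of relation symbols with arities and constant symbols; a database over $\tau$ with a finite domain $D$ interprets them. A replacement rule for a relation symbol $R$ is $R := \mu_R(\bar p;\bar x)$, where $\mu_R$ is a first-order formula over $\tau$, $\bar x$ has the arity of $R$, and $\bar p$ is a tuple of parameter variables. A replacement query $\rho(\bar p)$ is a set of replacement rules for distinct relation symbols, all with the same parameter tuple $\bar p$; it is parameter-free if $\bar p$ is empty, and quantifier-free (resp. existential, i.e. in $\mathrm{FO}[\exists^*]$) if all its formulas are. A change $\delta=\rho(\bar a)$ consists of a replacement query $\rho$ and a tuple $\bar a$ of domain elements of the arity of $\bar p$; $\delta(\mathcal D)$ is obtained from $\mathcal D$ by replacing every relation $R$ having a rule in $\rho$ by $\{\bar b : \mathcal D\models \mu_R(\bar a;\bar b)\}$. An insertion query is one in which every $\mu_R$ has the form $R(\bar x)\lor\varphi_R$; a deletion query one in which every $\mu_R$ has the form $R(\bar x)\land\varphi_R$. The single-tuple insertion $\mathrm{ins}_R(\bar p)$ is $R:=R(\bar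 x)\lor \bar x=\bar p$, the single-tuple deletion $\mathrm{del}_R(\bar p)$ is $R:=R(\bar x)\land\neg(\bar x=\bar p)$; $\Delta_\tau$ is the set of all single-tuple insertions and deletions for the relation symbols of $\tau$ ($\Delta_E$ for graphs with edge relation $E$). A dynamic program with input schema $\tau_{in}$ and auxiliary schema $\tau_{aux}$ operates on states $(D,\mathcal I,\mathcal A)$ consisting of an input database $\mathcal I$ and an auxiliary database $\mathcal A$ over a common fixed finite domain $D$. For every allowed replacement query $\rho(\bar p)$ and every auxiliary symbol $T$ it has an update formula $\varphi_T(\bar p;\bar x)$ over $\tau_{in}\cup\tau_{aux}$. On a change $\delta=\rho(\bar a)$ the new state has input $\delta(\mathcal I)$ and each $T$ becomes $\{\bar b : (\mathcal I,\mathcal A)\models\varphi_T(\bar a,\bar b)\}$, evaluated in the old state. A dynamic query is a pair $(q,\Delta)$ of a query $q$ and a set $\Delta$ of replacement queries. A program maintains $(q,\Delta)$, $q$ of arity $k$, if it has a $k$-ary auxiliary relation $Q$ such that for every domain, starting from the empty input and empty auxiliary database, after every nonempty sequence $\alpha$ of changes from $\Delta$ the relation $Q$ equals $q(\alpha(\mathcal I_\emptyset))$. DynFO is the class of dynamic queries maintainable with first-order update formulas; DynProp with quantifier-free update formulas. When maintenance is "for" a class of inputs, only change sequences all of whose intermediate inputs lie in that class are considered. Graphs are structures with one binary relation $E$; $q_{\mathrm{Reach}}$ maps a directed graph to the set of pairs $(u,v)$ such that there is a directed path from $u$ to $v$. *)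

theory Defs
  imports Main
begin

datatype ('r, 'v) fm =
    Rel 'r "'v list"
  | Eq 'v 'v
  | Neg "('r, 'v) fm"
  | Conj "('r, 'v) fm" "('r, 'v) fm"
  | Disj "('r, 'v) fm" "('r, 'v) fm"
  | Ex 'v "('r, 'v) fm"
  | All 'v "('r, 'v) fm"

fun holds :: "'d set \<Rightarrow> ('r \<Rightarrow> 'd list set) \<Rightarrow> ('v \<Rightarrow> 'd) \<Rightarrow> ('r, 'v) fm \<Rightarrow> bool" where
  "holds D I v (Rel r xs) = (map v xs \<in> I r)"
| "holds D I v (Eq x y) = (v x = v y)"
| "holds D I v (Neg \<phi>) = (\<not> holds D I v \<phi>)"
| "holds D I v (Conj \<phi> \<psi>) = (holds D I v \<phi> \<and> holds D I v \<psi>)"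
| "holds D I v (Disj \<phi> \<psi>) = (holds D I v \<phi> \<or> holds D I v \<psi>)"
| "holds D I v (Ex x \<phi>) = (\<exists>d\<in>D. holds D I (v(x := d)) \<phi>)"
| "holds D I v (All x \<phi>) = (\<forall>d\<in>D. holds D I (v(x := d)) \<phi>)"

fun fvars :: "('r, 'v) fm \<Rightarrow> 'v set" where
  "fvars (Rel r xs) = set xs"
| "fvars (Eq x y) = {x, y}"
| "fvars (Neg \<phi>) = fvars \<phi>"
| "fvars (Conj \<phi> \<psi>) = fvars \<phi> \<union> fvars \<psi>"
| "fvars (Disj \<phi> \<psi>) = fvars \<phi> \<union> fvars \<psi>"
| "fvars (Ex x \<phi>) = fvars \<phi> - {x}"
| "fvars (All x \<phi>) = fvars \<phi> - {x}"

fun rels :: "('r, 'v) fm \<Rightarrow> 'r set" where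
  "rels (Rel r xs) = {r}"
| "rels (Eq x y) = {}"
| "rels (Neg \<phi>) = rels \<phi>"
| "rels (Conj \<phi> \<psi>) = rels \<phi> \<union> rels \<psi>"
| "rels (Disj \<phi> \<psi>) = rels \<phi> \<union> rels \<psi>"
| "rels (Ex x \<phi>) = rels \<phi>"
| "rels (All x \<phi>) = rels \<phi>"

fun qfree :: "('r, 'v) fm \<Rightarrow> bool" where
  "qfree (Rel r xs) = True"
| "qfree (Eq x y) = True"
| "qfree (Neg \<phi>) = qfree \<phi>"
| "qfree (Conj \<phi> \<psi>) = (qfree \<phi> \<and> qfree \<psi>)"
| "qfree (Disj \<phi> \<psi>) = (qfree \<phi> \<and> qfree \<psi>)"
| "qfree (Ex x \<phi>) = False"
| "qfree (All x \<phi>) = False"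

datatype sym = Edge | Aux nat

text \<open>Variables: parameter variables P i, tuple variables X j (the \<open>\<bar>x\<close> of a rule / update
  formula), and further (bound) variables V k.\<close>
datatype var = P nat | X nat | V nat

type_synonym state = "sym \<Rightarrow> nat list set"

definition env :: "nat list \<Rightarrow> nat list \<Rightarrow> var \<Rightarrow> nat" where
  "env as bs x = (case x of P i \<Rightarrow> as ! i | X j \<Rightarrow> bs ! j | V k \<Rightarrow> 0)"

definition param_vars :: "nat \<Rightarrow> var set" where
  "param_vars k = {P i | i. i < k}"

definition tuple_vars :: "nat \<Rightarrow> var set" where
  "tuple_vars n = {X j | j. j < n}"

text \<open>A replacement query over the graph schema has a parameter tuple P 0, ..., P (k-1) and
  at most one rule E := mu(p; x0, x1) (None = no rule).\<close>
record gquery =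
  nparams :: nat
  rule :: "(sym, var) fm option"

definition wf_gquery :: "gquery \<Rightarrow> bool" where
  "wf_gquery \<rho> = (case rule \<rho> of None \<Rightarrow> True
     | Some \<mu> \<Rightarrow> rels \<mu> \<subseteq> {Edge} \<and> fvars \<mu> \<subseteq> param_vars (nparams \<rho>) \<union> tuple_vars 2)"

definition qf_insertion_query :: "gquery \<Rightarrow> bool" where
  "qf_insertion_query \<rho> = (wf_gquery \<rho> \<and> (case rule \<rho> of None \<Rightarrow> True
     | Some \<mu> \<Rightarrow> (\<exists>\<phi>. qfree \<phi> \<and> \<mu> = Disj (Rel Edge [X 0, X 1]) \<phi>)))"

definition ins_E :: gquery where
  "ins_E = \<lparr>nparams = 2, rule = Some (Disj (Rel Edge [X 0, X 1])
                                        (Conj (Eq (X 0) (P 0)) (Eq (X 1) (P 1))))\<rparr>"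

definition del_E :: gquery where
  "del_E = \<lparr>nparams = 2, rule = Some (Conj (Rel Edge [X 0, X 1])
                                        (Neg (Conj (Eq (X 0) (P 0)) (Eq (X 1) (P 1)))))\<rparr>"

definition Delta_E :: "gquery set" where
  "Delta_E = {ins_E, del_E}"

text \<open>The edge relation of the graph resulting from applying the change rho(as) to the
  graph with edge relation G over domain D (only the input relation E is visible).\<close>
definition apply_change :: "nat set \<Rightarrow> gquery \<Rightarrow> nat list \<Rightarrow> nat list set \<Rightarrow> nat list set" where
  "apply_change D \<rho> as G = (case rule \<rho> of None \<Rightarrow> G
     | Some \<mu> \<Rightarrow> {bs. length bs = 2 \<and> set bs \<subseteq> D \<and>
                     holds D (\<lambda>r. if r = Edge then G else {}) (env as bs) \<mu>})"

definition edges :: "nat list set \<Rightarrow> nat rel" where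
  "edges G = {(u, v). [u, v] \<in> G}"

definition reach :: "nat set \<Rightarrow> nat list set \<Rightarrow> nat list set" where
  "reach D G = {[u, v] | u v. u \<in> D \<and> v \<in> D \<and> (u, v) \<in> (edges G)\<^sup>*}"

definition inputs :: "nat set \<Rightarrow> (gquery \<times> nat list) list \<Rightarrow> nat list set" where
  "inputs D cs = fold (\<lambda>(\<rho>, as) G. apply_change D \<rho> as G) cs {}"

definition valid_seq :: "nat set \<Rightarrow> gquery set \<Rightarrow> (gquery \<times> nat list) list \<Rightarrow> bool" where
  "valid_seq D \<Delta> cs = ((\<forall>(\<rho>, as) \<in> set cs. \<rho> \<in> \<Delta> \<and> length as = nparams \<rho> \<and> set as \<subseteq> D)
      \<and> (\<forall>n \<le> length cs. acyclic (edges (inputs D (take n cs)))))"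

text \<open>A dynamic program: a finite relational auxiliary schema (symbols auxs with arities ar),
  a designated binary auxiliary symbol qsym (the query relation Q), and, for each
  replacement query rho and auxiliary symbol T, an update formula upd rho T.\<close>
record dprog =
  auxs :: "nat set"
  ar :: "nat \<Rightarrow> nat"
  qsym :: nat
  upd :: "gquery \<Rightarrow> nat \<Rightarrow> (sym, var) fm"

definition fo_over :: "dprog \<Rightarrow> var set \<Rightarrow> (sym, var) fm \<Rightarrow> bool" where
  "fo_over \<Pi> vs \<phi> = (rels \<phi> \<subseteq> insert Edge (Aux ` auxs \<Pi>) \<and> fvars \<phi> \<subseteq> vs)"

definition wf_dprog :: "gquery set \<Rightarrow> dprog \<Rightarrow> bool" where
  "wf_dprog \<Delta> \<Pi> = (finite (auxs \<Pi>) \<and> qsym \<Pi> \<in> auxs \<Pi> \<and> ar \<Pi> (qsym \<Pi>) = 2 \<and>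
     (\<forall>\<rho>\<in>\<Delta>. \<forall>T\<in>auxs \<Pi>.
        fo_over \<Pi> (param_vars (nparams \<rho>) \<union> tuple_vars (ar \<Pi> T)) (upd \<Pi> \<rho> T)))"

text \<open>One step: the input is changed, every auxiliary relation is recomputed by its update
  formula evaluated in the old state.\<close>
definition step :: "nat set \<Rightarrow> dprog \<Rightarrow> gquery \<times> nat list \<Rightarrow> state \<Rightarrow> state" where
  "step D \<Pi> c s = (case c of (\<rho>, as) \<Rightarrow> (\<lambda>r. case r of
       Edge \<Rightarrow> apply_change D \<rho> as (s Edge)
     | Aux T \<Rightarrow> (if T \<in> auxs \<Pi> then
          {bs. length bs = ar \<Pi> T \<and> set bs \<subseteq> D \<and> holds D s (env as bs) (upd \<Pi> \<rho> T)}
        else {})))"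

definition run :: "nat set \<Rightarrow> dprog \<Rightarrow> (gquery \<times> nat list) list \<Rightarrow> state" where
  "run D \<Pi> cs = fold (step D \<Pi>) cs (\<lambda>_. {})"

text \<open>The program maintains (q_Reach, Delta) for acyclic graphs (DynFO: update formulas are
  arbitrary first-order formulas).\<close>
definition maintains_reach_dag :: "gquery set \<Rightarrow> dprog \<Rightarrow> bool" where
  "maintains_reach_dag \<Delta> \<Pi> = (wf_dprog \<Delta> \<Pi> \<and>
     (\<forall>D. finite D \<longrightarrow> (\<forall>cs. cs \<noteq> [] \<longrightarrow> valid_seq D \<Delta> cs \<longrightarrow>
        run D \<Pi> cs (Aux (qsym \<Pi>)) = reach D (inputs D cs))))"

definition correct_guard :: "gquery set \<Rightarrow> dprog \<Rightarrow> gquery \<Rightarrow> (sym, var) fm \<Rightarrow> bool" where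
  "correct_guard \<Delta> \<Pi> \<rho> \<gamma> = (fo_over \<Pi> (param_vars (nparams \<rho>)) \<gamma> \<and>
     (\<forall>D. finite D \<longrightarrow> (\<forall>cs. cs \<noteq> [] \<longrightarrow> valid_seq D \<Delta> cs \<longrightarrow>
        (\<forall>as. length as = nparams \<rho> \<longrightarrow> set as \<subseteq> D \<longrightarrow>
          (holds D (run D \<Pi> cs) (env as []) \<gamma> \<longleftrightarrow>
           \<not> acyclic (edges (apply_change D \<rho> as (inputs D cs))))))))"

end

theory Submission
  imports Defs
begin


lemma holds_cong_val:
  "(\<forall>x\<in>fvars \<phi>. v x = v' x) \<Longrightarrow> holds D I v \<phi> = holds D I v' \<phi>"
proof (induction \<phi> arbitrary: v v')
  case (Rel r xs)
  have "map v xs = map v' xs" using Rel.prems by (auto simp: map_eq_conv)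
  then show ?case by (metis holds.simps(1))
next
  case (Conj \<phi>1 \<phi>2)
  have "holds D I v \<phi>1 = holds D I v' \<phi>1" "holds D I v \<phi>2 = holds D I v' \<phi>2"
    using Conj.prems by (auto intro!: Conj.IH)
  then show ?case by simp
next
  case (Disj \<phi>1 \<phi>2)
  have "holds D I v \<phi>1 = holds D I v' \<phi>1" "holds D I v \<phi>2 = holds D I v' \<phi>2"
    using Disj.prems by (auto intro!: Disj.IH)
  then show ?case by simp
next
  case (Ex x \<phi>)
  have "\<And>d. holds D I (v(x := d)) \<phi> = holds D I (v'(x := d)) \<phi>"
    using Ex.prems by (intro Ex.IH) auto
  then show ?case by simp
next
  case (All x \<phi>)
  have "\<And>d. holds D I (v(x := d)) \<phi> = holds D I (v'(x := d)) \<phi>"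
    using All.prems by (intro All.IH) auto
  then show ?case by simp
qed auto

lemma holds_cong_rel:
  "(\<forall>r\<in>rels \<phi>. I r = I' r) \<Longrightarrow> holds D I v \<phi> = holds D I' v \<phi>"
  by (induction \<phi> arbitrary: v) auto

fun ren :: "(var \<Rightarrow> var) \<Rightarrow> (sym, var) fm \<Rightarrow> (sym, var) fm" where
  "ren \<sigma> (Rel r xs) = Rel r (map \<sigma> xs)"
| "ren \<sigma> (Eq x y) = Eq (\<sigma> x) (\<sigma> y)"
| "ren \<sigma> (Neg \<phi>) = Neg (ren \<sigma> \<phi>)"
| "ren \<sigma> (Conj \<phi> \<psi>) = Conj (ren \<sigma> \<phi>) (ren \<sigma> \<psi>)"
| "ren \<sigma> (Disj \<phi> \<psi>) = Disj (ren \<sigma> \<phi>) (ren \<sigma> \<psi>)"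
| "ren \<sigma> (Ex x \<phi>) = Ex (\<sigma> x) (ren \<sigma> \<phi>)"
| "ren \<sigma> (All x \<phi>) = All (\<sigma> x) (ren \<sigma> \<phi>)"

lemma holds_ren: "qfree \<phi> \<Longrightarrow> holds D I v (ren \<sigma> \<phi>) = holds D I (v \<circ> \<sigma>) \<phi>"
  by (induction \<phi>) (auto simp: comp_def)

lemma fvars_ren: "fvars (ren \<sigma> \<phi>) \<subseteq> \<sigma> ` fvars \<phi> \<or> \<not> qfree \<phi>"
  by (induction \<phi>) auto

lemma rels_ren: "rels (ren \<sigma> \<phi>) = rels \<phi>"
  by (induction \<phi>) auto

lemma holds_qf_cong_aux:
  assumes "\<forall>r xs. set xs \<subseteq> Vs \<longrightarrow> (map v xs \<in> I r \<longleftrightarrow> map v' xs \<in> I r)"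
    and "\<forall>x\<in>Vs. \<forall>y\<in>Vs. (v x = v y \<longleftrightarrow> v' x = v' y)"
  shows "qfree \<phi> \<Longrightarrow> fvars \<phi> \<subseteq> Vs \<Longrightarrow> holds D I v \<phi> = holds D I v' \<phi>"
  using assms by (induction \<phi>) auto

lemma holds_qf_cong:
  assumes "qfree \<phi>"
    and "\<forall>r xs. set xs \<subseteq> fvars \<phi> \<longrightarrow> (map v xs \<in> I r \<longleftrightarrow> map v' xs \<in> I r)"
    and "\<forall>x\<in>fvars \<phi>. \<forall>y\<in>fvars \<phi>. (v x = v y \<longleftrightarrow> v' x = v' y)"
  shows "holds D I v \<phi> = holds D I v' \<phi>"
  using holds_qf_cong_aux[OF assms(2,3) assms(1)] by simp

section \<open>chains\<close>

fun chain :: "nat rel \<Rightarrow> nat rel \<Rightarrow> nat \<Rightarrow> (nat \<times> nat) list \<Rightarrow> nat \<Rightarrow> bool" where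
  "chain E M x [] y = ((x, y) \<in> E\<^sup>*)"
| "chain E M x ((w, z) # ps) y = ((x, w) \<in> E\<^sup>* \<and> (w, z) \<in> M \<and> chain E M z ps y)"

lemma chain_pre: "(a, b) \<in> E\<^sup>* \<Longrightarrow> chain E M b ps y \<Longrightarrow> chain E M a ps y"
  by (cases ps) auto

lemma chain_post: "chain E M x ps y \<Longrightarrow> (y, c) \<in> E\<^sup>* \<Longrightarrow> chain E M x ps c"
  by (induction ps arbitrary: x) auto

lemma chain_append:
  "chain E M x (ps @ qs) y \<longleftrightarrow> (\<exists>m. chain E M x ps m \<and> chain E M m qs y)"
proof (induction ps arbitrary: x)
  case Nil
  then show ?case using chain_pre by auto
next
  case (Cons p ps)
  then show ?case by (cases p) auto
qed

lemma chain_path: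
  assumes "E \<subseteq> M" "chain E M x ps y"
  shows "(x, y) \<in> M\<^sup>* \<and> (ps \<noteq> [] \<longrightarrow> (x, y) \<in> M\<^sup>+)"
  using assms(2)
proof (induction ps arbitrary: x)
  case Nil
  then show ?case using rtrancl_mono[OF assms(1)] by auto
next
  case (Cons p ps)
  obtain w z where p: "p = (w, z)" by (cases p)
  with Cons.prems have 1: "(x, w) \<in> M\<^sup>*" "(w, z) \<in> M" "chain E M z ps y"
    using rtrancl_mono[OF assms(1)] by auto
  with Cons.IH have "(z, y) \<in> M\<^sup>*" by blast
  with 1 have "(x, y) \<in> M\<^sup>+"
    by (meson rtrancl_into_trancl2 rtrancl_trancl_trancl)
  then show ?case by auto
qed

lemma path_chain: "(x, y) \<in> M\<^sup>* \<Longrightarrow> \<exists>ps. chain E M x ps y"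
proof (induction rule: rtrancl_induct)
  case base
  have "chain E M x [] x" by simp
  then show ?case by blast
next
  case (step y z)
  then obtain ps where "chain E M x ps y" by blast
  moreover have "chain E M y [(y, z)] z" using step by simp
  ultimately have "chain E M x (ps @ [(y, z)]) z" using chain_append by blast
  then show ?case by blast
qed

lemma nondistinct_split:
  "\<not> distinct (map f ps) \<Longrightarrow> \<exists>pre p mid q post. ps = pre @ [p] @ mid @ [q] @ post \<and> f p = f q"
proof (induction ps)
  case Nil
  then show ?case by simp
next
  case (Cons a ps)
  show ?case
  proof (cases "f a \<in> f ` set ps")
    case True
    then obtain q where q: "q \<in> set ps" "f q = f a" by auto
    then obtain mid post where "ps = mid @ q # post" by (meson split_list)
    then have "a # ps = [] @ [a] @ mid @ [q] @ post \<and> f a = f q" using q by simp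
    then show ?thesis by blast
  next
    case False
    with Cons.prems have "\<not> distinct (map f ps)" by auto
    with Cons.IH obtain pre p mid q post where "ps = pre @ [p] @ mid @ [q] @ post \<and> f p = f q"
      by blast
    then have "a # ps = (a # pre) @ [p] @ mid @ [q] @ post \<and> f p = f q" by simp
    then show ?thesis by blast
  qed
qed

definition vtyp :: "nat rel \<Rightarrow> nat list \<Rightarrow> nat \<Rightarrow> nat + (bool \<times> bool) list" where
  "vtyp E as u = (if u \<in> set as then Inl u else Inr (map (\<lambda>a. ((u, a) \<in> E, (a, u) \<in> E)) as))"

definition Kb :: "nat \<Rightarrow> nat" where "Kb k = k + 4 ^ k"

lemma card_types:
  fixes as :: "nat list"
  shows "card (Inl ` set as \<union> Inr ` {cs :: (bool \<times> bool) list. set cs \<subseteq> UNIV \<and> length cs = length as})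
     \<le> Kb (length as)"
proof -
  have fl: "finite {cs :: (bool \<times> bool) list. set cs \<subseteq> UNIV \<and> length cs = length as}"
    by (rule finite_lists_length_eq) simp
  have c: "card (UNIV :: (bool \<times> bool) set) = 4"
    by (simp flip: UNIV_Times_UNIV add: card_cartesian_product card_UNIV_bool)
  have "card (Inl ` set as \<union> Inr ` {cs :: (bool \<times> bool) list. set cs \<subseteq> UNIV \<and> length cs = length as})
     \<le> card (Inl ` set as :: (nat + (bool \<times> bool) list) set) + card (Inr ` {cs :: (bool \<times> bool) list. set cs \<subseteq> UNIV \<and> length cs = length as} :: (nat + (bool \<times> bool) list) set)"
    by (rule card_Un_le)
  also have "\<dots> \<le> card (set as) + card {cs :: (bool \<times> bool) list. set cs \<subseteq> UNIV \<and> length cs = length as}"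
    by (intro add_mono card_image_le fl) simp
  also have "\<dots> \<le> length as + 4 ^ length as"
    using card_lists_length_eq[of "UNIV :: (bool \<times> bool) set" "length as"] c card_length[of as]
    by simp
  finally show ?thesis by (simp add: Kb_def)
qed

lemma distinct_bound:
  assumes "distinct (map (vtyp E as \<circ> fst) ps)"
  shows "length ps \<le> Kb (length as)"
proof -
  let ?T = "Inl ` set as \<union> Inr ` {cs :: (bool \<times> bool) list. set cs \<subseteq> UNIV \<and> length cs = length as}"
  have "finite {cs :: (bool \<times> bool) list. set cs \<subseteq> UNIV \<and> length cs = length as}"
    by (rule finite_lists_length_eq) simp
  then have fin: "finite ?T" by blast
  have sub: "set (map (vtyp E as \<circ> fst) ps) \<subseteq> ?T" by (auto simp: vtyp_def)
  have "length ps = card (set (map (vtyp E as \<circ> fst) ps))"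
    using distinct_card[OF assms] by simp
  also have "\<dots> \<le> card ?T" by (rule card_mono[OF fin sub])
  also have "\<dots> \<le> Kb (length as)" by (rule card_types)
  finally show ?thesis .
qed



definition Mrel :: "nat set \<Rightarrow> (sym, var) fm \<Rightarrow> nat list \<Rightarrow> nat list set \<Rightarrow> nat rel" where
  "Mrel D \<mu> as G = {(u, w). u \<in> D \<and> w \<in> D \<and>
      holds D (\<lambda>r. if r = Edge then G else {}) (env as [u, w]) \<mu>}"

locale setting =
  fixes D :: "nat set" and G :: "nat list set" and as :: "nat list" and \<mu> \<phi> :: "(sym, var) fm"
  assumes mu: "\<mu> = Disj (Rel Edge [X 0, X 1]) \<phi>" and qf: "qfree \<phi>"
    and fv: "fvars \<mu> \<subseteq> param_vars (length as) \<union> tuple_vars 2"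
    and Gwf: "\<forall>bs\<in>G. length bs = 2 \<and> set bs \<subseteq> D"
    and acyc: "acyclic (edges G)"
    and rl: "rels \<mu> \<subseteq> {Edge}"
begin

abbreviation "E \<equiv> edges G"
abbreviation "M \<equiv> Mrel D \<mu> as G"
abbreviation "K \<equiv> Kb (length as)"

lemma E_sub_M: "E \<subseteq> M"
proof
  fix p assume "p \<in> E"
  then obtain u w where p: "p = (u, w)" "[u, w] \<in> G" by (auto simp: edges_def)
  then have "u \<in> D" "w \<in> D" using Gwf by auto
  moreover have "holds D (\<lambda>r. if r = Edge then G else {}) (env as [u, w]) \<mu>"
    using p mu by (simp add: env_def)
  ultimately show "p \<in> M" using p by (simp add: Mrel_def)
qed

lemma irr: "(u, u) \<notin> E"
  using acyc by (auto simp: acyclic_def)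

lemma M_D: "(u, w) \<in> M \<Longrightarrow> u \<in> D \<and> w \<in> D"
  by (simp add: Mrel_def)

lemma core:
  assumes Mw': "(w', z') \<in> M"
    and ty: "vtyp E as w = vtyp E as w'" and ne: "w \<noteq> w'" "w \<noteq> z'" "w' \<noteq> z'"
    and ne2: "(w, z') \<notin> E" "(z', w) \<notin> E" "(w', z') \<notin> E" "(z', w') \<notin> E"
    and wD: "w \<in> D"
  shows "(w, z') \<in> M"
proof -
  define I where "I = (\<lambda>r::sym. if r = Edge then G else {})"
  define v where "v = env as [w, z']"
  define v' where "v' = env as [w', z']"
  have nw: "w \<notin> set as" "w' \<notin> set as" and mp: "map (\<lambda>a. ((w, a) \<in> E, (a, w) \<in> E)) as
      = map (\<lambda>a. ((w', a) \<in> E, (a, w') \<in> E)) as"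
    using ty ne(1) by (auto simp: vtyp_def split: if_splits)
  have H: "\<forall>c\<in>insert z' (set as). (w = c \<longleftrightarrow> w' = c) \<and> ((w, c) \<in> E \<longleftrightarrow> (w', c) \<in> E)
       \<and> ((c, w) \<in> E \<longleftrightarrow> (c, w') \<in> E)"
  proof
    fix c assume c: "c \<in> insert z' (set as)"
    show "(w = c \<longleftrightarrow> w' = c) \<and> ((w, c) \<in> E \<longleftrightarrow> (w', c) \<in> E) \<and> ((c, w) \<in> E \<longleftrightarrow> (c, w') \<in> E)"
    proof (cases "c = z'")
      case True then show ?thesis using ne ne2 by auto
    next
      case False
      then have "c \<in> set as" using c by simp
      then have "((w, c) \<in> E, (c, w) \<in> E) = ((w', c) \<in> E, (c, w') \<in> E)"
        using mp by (simp add: map_eq_conv)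
      then show ?thesis using nw \<open>c \<in> set as\<close> by auto
    qed
  qed
  have ir: "(w, w) \<notin> E" "(w', w') \<notin> E" using irr by auto
  have key: "\<And>x. x \<in> fvars \<mu> \<Longrightarrow> (v x = w \<and> v' x = w') \<or> (v x = v' x \<and> v x \<in> insert z' (set as))"
  proof -
    fix x assume "x \<in> fvars \<mu>"
    then have "x \<in> param_vars (length as) \<union> tuple_vars 2" using fv by auto
    then show "(v x = w \<and> v' x = w') \<or> (v x = v' x \<and> v x \<in> insert z' (set as))"
      by (auto simp: param_vars_def tuple_vars_def v_def v'_def env_def less_2_cases_iff)
  qed
  have pairE: "((v x1, v x2) \<in> E) \<longleftrightarrow> ((v' x1, v' x2) \<in> E)"
    if "x1 \<in> fvars \<mu>" "x2 \<in> fvars \<mu>" for x1 x2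
  proof -
    from key[OF that(1)] consider (a) "v x1 = w" "v' x1 = w'"
      | (b) "v x1 = v' x1" "v x1 \<in> insert z' (set as)" by blast
    then show ?thesis
    proof cases
      case a
      from key[OF that(2)] consider (c) "v x2 = w" "v' x2 = w'"
        | (d) "v x2 = v' x2" "v x2 \<in> insert z' (set as)" by blast
      then show ?thesis
      proof cases
        case c then show ?thesis using a ir by simp
      next
        case d then show ?thesis using a H[rule_format, OF d(2)] by simp
      qed
    next
      case b
      from key[OF that(2)] consider (c) "v x2 = w" "v' x2 = w'"
        | (d) "v x2 = v' x2" "v x2 \<in> insert z' (set as)" by blast
      then show ?thesis
      proof cases
        case c then show ?thesis using b H[rule_format, OF b(2)] by simp
      next
        case d then show ?thesis using b by simp
      qed
    qed
  qed
  have pairEq: "(v x1 = v x2) \<longleftrightarrow> (v' x1 = v' x2)"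
    if "x1 \<in> fvars \<mu>" "x2 \<in> fvars \<mu>" for x1 x2
  proof -
    from key[OF that(1)] consider (a) "v x1 = w" "v' x1 = w'"
      | (b) "v x1 = v' x1" "v x1 \<in> insert z' (set as)" by blast
    then show ?thesis
    proof cases
      case a
      from key[OF that(2)] consider (c) "v x2 = w" "v' x2 = w'"
        | (d) "v x2 = v' x2" "v x2 \<in> insert z' (set as)" by blast
      then show ?thesis
      proof cases
        case c then show ?thesis using a by simp
      next
        case d then show ?thesis using a H[rule_format, OF d(2)] by simp
      qed
    next
      case b
      from key[OF that(2)] consider (c) "v x2 = w" "v' x2 = w'"
        | (d) "v x2 = v' x2" "v x2 \<in> insert z' (set as)" by blast
      then show ?thesis
      proof cases
        case c then show ?thesis using b H[rule_format, OF b(2)] by metis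
      next
        case d then show ?thesis using b by simp
      qed
    qed
  qed
  have qfm: "qfree \<mu>" using mu qf by simp
  have c1: "\<forall>r xs. set xs \<subseteq> fvars \<mu> \<longrightarrow> (map v xs \<in> I r \<longleftrightarrow> map v' xs \<in> I r)"
  proof (intro allI impI)
    fix r xs assume xs: "set xs \<subseteq> fvars \<mu>"
    show "map v xs \<in> I r \<longleftrightarrow> map v' xs \<in> I r"
    proof (cases "r = Edge \<and> length xs = 2")
      case True
      then obtain x1 x2 where xs2: "xs = [x1, x2]"
        by (metis (no_types, lifting) One_nat_def Suc_1 length_0_conv length_Suc_conv)
      then have "x1 \<in> fvars \<mu>" "x2 \<in> fvars \<mu>" using xs by auto
      then have "((v x1, v x2) \<in> E) \<longleftrightarrow> ((v' x1, v' x2) \<in> E)" by (rule pairE)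
      then show ?thesis using True xs2 by (simp add: I_def edges_def)
    next
      case False
      then show ?thesis using Gwf by (auto simp: I_def)
    qed
  qed
  have c2: "\<forall>x\<in>fvars \<mu>. \<forall>y\<in>fvars \<mu>. (v x = v y \<longleftrightarrow> v' x = v' y)"
  proof (intro ballI)
    fix x y assume "x \<in> fvars \<mu>" "y \<in> fvars \<mu>"
    then show "(v x = v y \<longleftrightarrow> v' x = v' y)" by (rule pairEq)
  qed
  have "holds D I v' \<mu>" using Mw' by (simp add: Mrel_def I_def v'_def)
  then have "holds D I v \<mu>" using holds_qf_cong[OF qfm c1 c2] by simp
  moreover have "z' \<in> D" using M_D[OF Mw'] by simp
  ultimately show ?thesis using wD by (simp add: Mrel_def I_def v_def)
qed

lemma shorten:
  assumes ac: "acyclic M" and ch: "chain E M x ps y" and len: "length ps > K"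
  shows "\<exists>qs. chain E M x qs y \<and> length qs < length ps"
proof -
  have "\<not> distinct (map (vtyp E as \<circ> fst) ps)" using distinct_bound len by fastforce
  then obtain pre p mid q post where ps: "ps = pre @ [p] @ mid @ [q] @ post"
    and tq: "(vtyp E as \<circ> fst) p = (vtyp E as \<circ> fst) q"
    using nondistinct_split by blast
  obtain w z1 where p: "p = (w, z1)" by (cases p)
  obtain w' z' where q: "q = (w', z')" by (cases q)
  have ty: "vtyp E as w = vtyp E as w'" using tq p q by simp
  from ch ps p q obtain m1 where c1: "chain E M x pre m1"
    and c2: "chain E M m1 ((w, z1) # mid @ (w', z') # post) y"
    using chain_append by (metis append_Cons append_Nil)
  from c2 have m1w: "(m1, w) \<in> E\<^sup>*" and wz1: "(w, z1) \<in> M"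
    and c3: "chain E M z1 (mid @ (w', z') # post) y" by auto
  from c3 obtain m2 where c4: "chain E M z1 mid m2" and c5: "chain E M m2 ((w', z') # post) y"
    using chain_append by blast
  from c5 have m2w': "(m2, w') \<in> E\<^sup>*" and wz': "(w', z') \<in> M" and c6: "chain E M z' post y"
    by auto
  have "(z1, m2) \<in> M\<^sup>*" using chain_path[OF E_sub_M c4] by simp
  moreover have "(m2, w') \<in> M\<^sup>*" using m2w' rtrancl_mono[OF E_sub_M] by blast
  ultimately have z1w': "(z1, w') \<in> M\<^sup>*" by simp
  have ww': "(w, w') \<in> M\<^sup>+" using wz1 z1w' by (meson rtrancl_into_trancl2)
  have wz'': "(w, z') \<in> M\<^sup>+" using ww' wz' by simp
  have lenps: "length ps = length pre + length mid + length post + 2" using ps by simp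
  show ?thesis
  proof (cases "(w, z') \<in> E\<^sup>*")
    case True
    have "(m1, z') \<in> E\<^sup>*" using m1w True by simp
    then have "chain E M m1 post y" using chain_pre[OF _ c6] by blast
    then have "chain E M x (pre @ post) y" using c1 chain_append by blast
    then show ?thesis using lenps by fastforce
  next
    case F1: False
    show ?thesis
    proof (cases "(w', z') \<in> E\<^sup>*")
      case True
      have "(m2, z') \<in> E\<^sup>*" using m2w' True by simp
      then have "chain E M m2 post y" using chain_pre[OF _ c6] by blast
      then have "chain E M z1 (mid @ post) y" using c4 chain_append by blast
      then have "chain E M m1 ((w, z1) # mid @ post) y" using m1w wz1 by simp
      then have "chain E M x (pre @ (w, z1) # mid @ post) y" using c1 chain_append by blast
      then show ?thesis using lenps by fastforce
    next
      case F2: False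
      have "(w, z') \<in> M"
      proof (rule core[OF wz' ty])
        show "w \<noteq> w'" using ww' ac by (auto simp: acyclic_def)
        show "w \<noteq> z'" using F1 by auto
        show "w' \<noteq> z'" using F2 by auto
        show "(w, z') \<notin> E" using F1 by auto
        show "(z', w) \<notin> E"
        proof
          assume "(z', w) \<in> E"
          then have "(z', w) \<in> M" using E_sub_M by auto
          then have "(w, w) \<in> M\<^sup>+" using wz'' by simp
          then show False using ac by (auto simp: acyclic_def)
        qed
        show "(w', z') \<notin> E" using F2 by auto
        show "(z', w') \<notin> E"
        proof
          assume "(z', w') \<in> E"
          then have "(z', w') \<in> M" using E_sub_M by auto
          then have "(w', w') \<in> M\<^sup>+" using wz' by (meson trancl.intros)
          then show False using ac by (auto simp: acyclic_def)
        qed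
        show "w \<in> D" using M_D[OF wz1] by simp
      qed
      then have "chain E M m1 ((w, z') # post) y" using m1w c6 by simp
      then have "chain E M x (pre @ (w, z') # post) y" using c1 chain_append by blast
      then show ?thesis using lenps by fastforce
    qed
  qed
qed

lemma reach_bound:
  assumes ac: "acyclic M" and xy: "(x, y) \<in> M\<^sup>*"
  shows "\<exists>ps. length ps \<le> K \<and> chain E M x ps y"
proof -
  have "\<forall>ps. length ps = n \<longrightarrow> chain E M x ps y \<longrightarrow> (\<exists>qs. length qs \<le> K \<and> chain E M x qs y)" for n
  proof (induction n rule: less_induct)
    case (less n)
    show ?case
    proof (intro allI impI)
      fix ps assume "length ps = n" "chain E M x ps y"
      then show "\<exists>qs. length qs \<le> K \<and> chain E M x qs y"
      proof (cases "length ps \<le> K")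
        case False
        then obtain qs where "chain E M x qs y" "length qs < length ps"
          using shorten[OF ac \<open>chain E M x ps y\<close>] by auto
        then show ?thesis using less.IH \<open>length ps = n\<close> by blast
      qed blast
    qed
  qed
  moreover obtain ps where "chain E M x ps y" using path_chain[OF xy] by blast
  ultimately show ?thesis by blast
qed

end



lemma chain_rot: "chain E M x (ps @ qs) x \<Longrightarrow> \<exists>m. chain E M m (qs @ ps) m"
proof -
  assume "chain E M x (ps @ qs) x"
  then obtain m where "chain E M x ps m" "chain E M m qs x" using chain_append by blast
  then have "chain E M m (qs @ ps) m" using chain_append by blast
  then show ?thesis by blast
qed

lemma chain_start: "chain E M m ((w, z) # rest) m \<Longrightarrow> chain E M w ((w, z) # rest) w"
proof -
  assume a: "chain E M m ((w, z) # rest) m"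
  then have "(m, w) \<in> E\<^sup>*" "(w, z) \<in> M" "chain E M z rest m" by auto
  then have "chain E M z rest w" using chain_post by blast
  then show ?thesis using \<open>(w, z) \<in> M\<close> by simp
qed

context setting
begin

lemma cyc_core:
  assumes ch: "chain E M w ((w, z1) # A @ (w', z') # rest) w" and rest: "rest \<noteq> []"
    and ty: "vtyp E as w = vtyp E as w'"
  shows "\<exists>x' qs. qs \<noteq> [] \<and> chain E M x' qs x' \<and> length qs < Suc (length A + Suc (length rest))"
proof -
  from ch have wz1: "(w, z1) \<in> M" and c3: "chain E M z1 (A @ (w', z') # rest) w" by auto
  from c3 obtain m2 where c4: "chain E M z1 A m2" and c5: "chain E M m2 ((w', z') # rest) w"
    using chain_append by blast
  from c5 have m2w': "(m2, w') \<in> E\<^sup>*" and wz': "(w', z') \<in> M" and c6: "chain E M z' rest w"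
    by auto
  show ?thesis
  proof (cases "(w, z') \<in> E\<^sup>*")
    case True
    have "chain E M z' rest z'" using chain_post[OF c6 True] .
    then show ?thesis using rest by (intro exI[of _ z'] exI[of _ rest]) simp
  next
    case Fa: False
    show ?thesis
    proof (cases "(z', w) \<in> E\<^sup>*")
      case True
      have "chain E M m2 [(w', z')] w" using m2w' wz' True by simp
      then have "chain E M z1 (A @ [(w', z')]) w" using c4 chain_append by blast
      then have "chain E M w ((w, z1) # A @ [(w', z')]) w" using wz1 by simp
      then show ?thesis using rest by (intro exI[of _ w] exI[of _ "(w, z1) # A @ [(w', z')]"]) simp
    next
      case Fc: False
      show ?thesis
      proof (cases "(w', z') \<in> E\<^sup>*")
        case True
        have "(m2, z') \<in> E\<^sup>*" using m2w' True by simp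
        then have "chain E M z1 A z'" using chain_post[OF c4] by blast
        then have "chain E M w ((w, z1) # A) z'" using wz1 by simp
        then have "chain E M z' (rest @ (w, z1) # A) z'" using c6 chain_append by blast
        then show ?thesis by (intro exI[of _ z'] exI[of _ "rest @ (w, z1) # A"]) simp
      next
        case Fd: False
        show ?thesis
        proof (cases "(z', w') \<in> E\<^sup>*")
          case True
          have "chain E M w' [(w', z')] w'" using wz' True by simp
          then show ?thesis by (intro exI[of _ w'] exI[of _ "[(w', z')]"]) simp
        next
          case Fe: False
          show ?thesis
          proof (cases "w = w'")
            case True
            have "chain E M z1 A w" using chain_post[OF c4] m2w' True by blast
            then have "chain E M w ((w, z1) # A) w" using wz1 by simp
            then show ?thesis by (intro exI[of _ w] exI[of _ "(w, z1) # A"]) simp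
          next
            case Ff: False
            have "(w, z') \<in> M"
            proof (rule core[OF wz' ty Ff])
              show "w \<noteq> z'" using Fa by auto
              show "w' \<noteq> z'" using Fd by auto
              show "(w, z') \<notin> E" using Fa by auto
              show "(z', w) \<notin> E" using Fc by auto
              show "(w', z') \<notin> E" using Fd by auto
              show "(z', w') \<notin> E" using Fe by auto
              show "w \<in> D" using M_D[OF wz1] by simp
            qed
            then have "chain E M w ((w, z') # rest) w" using c6 by simp
            then show ?thesis using rest by (intro exI[of _ w] exI[of _ "(w, z') # rest"]) simp
          qed
        qed
      qed
    qed
  qed
qed

lemma shorten_cycle:
  assumes ch: "chain E M x ps x" and len: "length ps > K + 2"
  shows "\<exists>x' qs. qs \<noteq> [] \<and> chain E M x' qs x' \<and> length qs < length ps"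
proof -
  have "\<not> distinct (map (vtyp E as \<circ> fst) ps)" using distinct_bound len by fastforce
  then obtain pre p mid q post where ps: "ps = pre @ [p] @ mid @ [q] @ post"
    and tq: "(vtyp E as \<circ> fst) p = (vtyp E as \<circ> fst) q"
    using nondistinct_split by blast
  obtain w z1 where p: "p = (w, z1)" by (cases p)
  obtain w' z' where q: "q = (w', z')" by (cases q)
  have ty: "vtyp E as w = vtyp E as w'" using tq p q by simp
  have lenps: "length ps = length pre + length mid + length post + 2" using ps by simp
  show ?thesis
  proof (cases "post @ pre = []")
    case False
    have "chain E M x (pre @ ((w, z1) # mid @ (w', z') # post)) x" using ch ps p q by simp
    then obtain m where "chain E M m (((w, z1) # mid @ (w', z') # post) @ pre) m"
      using chain_rot by blast
    then have "chain E M m ((w, z1) # mid @ (w', z') # (post @ pre)) m" by simp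
    then have "chain E M w ((w, z1) # mid @ (w', z') # (post @ pre)) w" by (rule chain_start)
    from cyc_core[OF this False ty] obtain x' qs where r: "qs \<noteq> []" "chain E M x' qs x'"
      "length qs < Suc (length mid + Suc (length (post @ pre)))" by blast
    have "length qs < length ps" using r(3) lenps by simp
    then show ?thesis using r by blast
  next
    case True
    show ?thesis
    proof (cases "mid = []")
      case True
      then show ?thesis using \<open>post @ pre = []\<close> lenps len by simp
    next
      case False
      have "chain E M x ((pre @ [(w, z1)] @ mid) @ ((w', z') # post)) x" using ch ps p q by simp
      then obtain m where "chain E M m (((w', z') # post) @ (pre @ [(w, z1)] @ mid)) m"
        using chain_rot by blast
      then have "chain E M m ((w', z') # (post @ pre) @ (w, z1) # mid) m" by simp
      then have "chain E M w' ((w', z') # (post @ pre) @ (w, z1) # mid) w'" by (rule chain_start)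
      from cyc_core[OF this False ty[symmetric]] obtain x' qs where r: "qs \<noteq> []" "chain E M x' qs x'"
        "length qs < Suc (length (post @ pre) + Suc (length mid))" by blast
      have "length qs < length ps" using r(3) lenps by simp
      then show ?thesis using r by blast
    qed
  qed
qed

lemma cycle_bound:
  assumes xx: "(x, x) \<in> M\<^sup>+"
  shows "\<exists>x'\<in>D. \<exists>ps. ps \<noteq> [] \<and> length ps \<le> K + 2 \<and> chain E M x' ps x'"
proof -
  have "\<forall>x ps. length ps = n \<longrightarrow> ps \<noteq> [] \<longrightarrow> chain E M x ps x \<longrightarrow>
      (\<exists>x' qs. qs \<noteq> [] \<and> length qs \<le> K + 2 \<and> chain E M x' qs x')" for n
  proof (induction n rule: less_induct)
    case (less n)
    show ?case
    proof (intro allI impI)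
      fix x ps assume a: "length ps = n" "ps \<noteq> []" "chain E M x ps x"
      then show "\<exists>x' qs. qs \<noteq> [] \<and> length qs \<le> K + 2 \<and> chain E M x' qs x'"
      proof (cases "length ps \<le> K + 2")
        case False
        then obtain x' qs where "qs \<noteq> []" "chain E M x' qs x'" "length qs < length ps"
          using shorten_cycle[OF a(3)] by auto
        then show ?thesis using less.IH a(1) by blast
      qed blast
    qed
  qed
  moreover obtain c where "(x, c) \<in> M" "(c, x) \<in> M\<^sup>*" using xx
    by (meson converse_tranclE trancl_into_rtrancl)
  moreover obtain ps where "chain E M c ps x" using path_chain[OF \<open>(c, x) \<in> M\<^sup>*\<close>] by blast
  moreover have "chain E M x ((x, c) # ps) x" using calculation by simp
  ultimately have "\<exists>x' qs. qs \<noteq> [] \<and> length qs \<le> K + 2 \<and> chain E M x' qs x'"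
    by blast
  then obtain x' qs where q: "qs \<noteq> []" "length qs \<le> K + 2" "chain E M x' qs x'" by blast
  then obtain w z rest where qs: "qs = (w, z) # rest" by (metis list.exhaust surj_pair)
  have "chain E M w qs w" using chain_start q(3) qs by blast
  moreover have "w \<in> D" using q(3) qs M_D by auto
  ultimately show ?thesis using q by blast
qed

end



definition Rst :: "var \<Rightarrow> var \<Rightarrow> (sym, var) fm" where
  "Rst x y = Disj (Eq x y) (Rel (Aux 0) [x, y])"

definition sig :: "var \<Rightarrow> var \<Rightarrow> var \<Rightarrow> var" where
  "sig a b x = (case x of X j \<Rightarrow> (if j = 0 then a else b) | _ \<Rightarrow> x)"

fun CH :: "(sym, var) fm \<Rightarrow> nat \<Rightarrow> var \<Rightarrow> var \<Rightarrow> (sym, var) fm" where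
  "CH \<mu> 0 x y = Rst x y"
| "CH \<mu> (Suc n) x y = Ex (V (2 * n)) (Ex (V (2 * n + 1))
     (Conj (Rst x (V (2 * n))) (Conj (ren (sig (V (2 * n)) (V (2 * n + 1))) \<mu>) (CH \<mu> n (V (2 * n + 1)) y))))"

definition FF :: "(sym, var) fm" where "FF = Ex (V 0) (Neg (Eq (V 0) (V 0)))"

fun Disjs :: "(sym, var) fm list \<Rightarrow> (sym, var) fm" where
  "Disjs [] = FF"
| "Disjs (f # fs) = Disj f (Disjs fs)"

definition Inv :: "nat set \<Rightarrow> state \<Rightarrow> bool" where
  "Inv D s = (\<forall>u\<in>D. \<forall>w\<in>D. (u = w \<or> [u, w] \<in> s (Aux 0)) = ((u, w) \<in> (edges (s Edge))\<^sup>*))"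

lemma FF_sem[simp]: "holds D I v FF = False"
  by (simp add: FF_def)

lemma Disjs_sem: "holds D I v (Disjs fs) = (\<exists>f\<in>set fs. holds D I v f)"
  by (induction fs) auto

lemma fvars_Disjs: "fvars (Disjs fs) \<subseteq> \<Union> (fvars ` set fs)"
  by (induction fs) (auto simp: FF_def)

lemma rels_Disjs: "rels (Disjs fs) \<subseteq> \<Union> (rels ` set fs)"
  by (induction fs) (auto simp: FF_def)

lemma Rst_sem:
  "Inv D s \<Longrightarrow> v x \<in> D \<Longrightarrow> v y \<in> D \<Longrightarrow> holds D s v (Rst x y) = ((v x, v y) \<in> (edges (s Edge))\<^sup>*)"
  by (simp add: Rst_def Inv_def)

lemma fvars_Rst[simp]: "fvars (Rst x y) = {x, y}" by (auto simp: Rst_def)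
lemma rels_Rst[simp]: "rels (Rst x y) = {Aux 0}" by (auto simp: Rst_def)

lemma fvars_CH:
  assumes "fvars \<mu> \<subseteq> param_vars k \<union> tuple_vars 2" "qfree \<mu>"
  shows "fvars (CH \<mu> n x y) \<subseteq> {x, y} \<union> param_vars k"
proof (induction n arbitrary: x y)
  case 0
  then show ?case by simp
next
  case (Suc n)
  have "fvars (ren (sig (V (2 * n)) (V (2 * n + 1))) \<mu>) \<subseteq> sig (V (2 * n)) (V (2 * n + 1)) ` fvars \<mu>"
    using fvars_ren assms(2) by blast
  also have "\<dots> \<subseteq> {V (2 * n), V (2 * n + 1)} \<union> param_vars k"
  proof
    fix z assume "z \<in> sig (V (2 * n)) (V (2 * n + 1)) ` fvars \<mu>"
    then obtain x where x: "x \<in> fvars \<mu>" "z = sig (V (2 * n)) (V (2 * n + 1)) x" by blast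
    then have "x \<in> param_vars k \<union> tuple_vars 2" using assms(1) by auto
    then have "(\<exists>i<k. x = P i) \<or> x = X 0 \<or> x = X 1"
      by (auto simp: tuple_vars_def param_vars_def less_2_cases_iff)
    then show "z \<in> {V (2 * n), V (2 * n + 1)} \<union> param_vars k"
      using x(2) by (auto simp: sig_def param_vars_def)
  qed
  finally show ?case using Suc.IH[of "V (2 * n + 1)" y] by auto
qed

lemma rels_CH:
  assumes "rels \<mu> \<subseteq> {Edge}"
  shows "rels (CH \<mu> n x y) \<subseteq> {Edge, Aux 0}"
  using assms by (induction n arbitrary: x y) (auto simp: rels_ren)

context setting
begin

lemma qfm: "qfree \<mu>" using mu qf by simp

lemma Mf_sem:
  assumes sE: "s Edge = G" and vP: "\<forall>i<length as. v (P i) = as ! i"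
    and aD: "v a \<in> D" and bD: "v b \<in> D"
  shows "holds D s v (ren (sig a b) \<mu>) = ((v a, v b) \<in> M)"
proof -
  define I where "I = (\<lambda>r::sym. if r = Edge then G else {})"
  have "holds D s v (ren (sig a b) \<mu>) = holds D s (v \<circ> sig a b) \<mu>" by (rule holds_ren[OF qfm])
  also have "\<dots> = holds D I (v \<circ> sig a b) \<mu>"
    by (rule holds_cong_rel) (use rl sE in \<open>auto simp: I_def\<close>)
  also have "\<dots> = holds D I (env as [v a, v b]) \<mu>"
  proof (rule holds_cong_val, rule ballI)
    fix x assume "x \<in> fvars \<mu>"
    then have "x \<in> param_vars (length as) \<union> tuple_vars 2" using fv by auto
    then show "(v \<circ> sig a b) x = env as [v a, v b] x"
      using vP by (auto simp: param_vars_def tuple_vars_def sig_def env_def less_2_cases_iff)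
  qed
  finally show ?thesis using aD bD by (simp add: Mrel_def I_def)
qed

lemma CH_sem:
  assumes inv: "Inv D s" and sE: "s Edge = G" and vP: "\<forall>i<length as. v (P i) = as ! i"
    and xn: "x \<notin> V ` {..<2 * n}" and yn: "y \<notin> V ` {..<2 * n}"
    and xD: "v x \<in> D" and yD: "v y \<in> D"
  shows "holds D s v (CH \<mu> n x y) = (\<exists>ps. length ps = n \<and> chain E M (v x) ps (v y))"
  using vP xn yn xD yD
proof (induction n arbitrary: v x y)
  case 0
  then show ?case using Rst_sem[OF inv] sE by simp
next
  case (Suc n)
  let ?a = "V (2 * n)" and ?b = "V (2 * n + 1)"
  have xa: "x \<noteq> ?a" "x \<noteq> ?b" "y \<noteq> ?a" "y \<noteq> ?b" using Suc.prems by auto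
  have inner: "holds D s (v(?a := d, ?b := e))
      (Conj (Rst x ?a) (Conj (ren (sig ?a ?b) \<mu>) (CH \<mu> n ?b y)))
      = ((v x, d) \<in> E\<^sup>* \<and> (d, e) \<in> M \<and> (\<exists>ps. length ps = n \<and> chain E M e ps (v y)))"
    if dD: "d \<in> D" and eD: "e \<in> D" for d e
  proof -
    let ?v = "v(?a := d, ?b := e)"
    have vP': "\<forall>i<length as. ?v (P i) = as ! i" using Suc.prems by simp
    have 1: "holds D s ?v (Rst x ?a) = ((v x, d) \<in> E\<^sup>*)"
      using Rst_sem[OF inv, of ?v x ?a] xa Suc.prems dD sE by simp
    have 2: "holds D s ?v (ren (sig ?a ?b) \<mu>) = ((d, e) \<in> M)"
      using Mf_sem[where s=s and v="?v" and a="?a" and b="?b"] sE vP' dD eD by simp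
    have 3: "holds D s ?v (CH \<mu> n ?b y) = (\<exists>ps. length ps = n \<and> chain E M e ps (v y))"
    proof -
      have b1: "?b \<notin> V ` {..<2 * n}" by auto
      have y1: "y \<notin> V ` {..<2 * n}" using Suc.prems by auto
      have b2: "?v ?b \<in> D" using eD by simp
      have y2: "?v y \<in> D" using Suc.prems xa by simp
      have "holds D s ?v (CH \<mu> n ?b y) = (\<exists>ps. length ps = n \<and> chain E M (?v ?b) ps (?v y))"
        by (rule Suc.IH[OF vP' b1 y1 b2 y2])
      then show ?thesis using xa by simp
    qed
    show ?thesis using 1 2 3 by simp
  qed
  have "holds D s v (CH \<mu> (Suc n) x y) = (\<exists>d\<in>D. \<exists>e\<in>D. (v x, d) \<in> E\<^sup>* \<and> (d, e) \<in> M \<and>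
          (\<exists>ps. length ps = n \<and> chain E M e ps (v y)))"
    using inner by simp
  also have "\<dots> = (\<exists>ps. length ps = Suc n \<and> chain E M (v x) ps (v y))"
  proof
    assume "\<exists>d\<in>D. \<exists>e\<in>D. (v x, d) \<in> E\<^sup>* \<and> (d, e) \<in> M \<and> (\<exists>ps. length ps = n \<and> chain E M e ps (v y))"
    then obtain d e ps where "(v x, d) \<in> E\<^sup>*" "(d, e) \<in> M" "length ps = n" "chain E M e ps (v y)"
      by blast
    then have "length ((d, e) # ps) = Suc n \<and> chain E M (v x) ((d, e) # ps) (v y)" by simp
    then show "\<exists>ps. length ps = Suc n \<and> chain E M (v x) ps (v y)" by blast
  next
    assume "\<exists>ps. length ps = Suc n \<and> chain E M (v x) ps (v y)"
    then obtain d e ps where "length ps = n" "chain E M (v x) ((d, e) # ps) (v y)"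
      by (metis Suc_length_conv surj_pair)
    then show "\<exists>d\<in>D. \<exists>e\<in>D. (v x, d) \<in> E\<^sup>* \<and> (d, e) \<in> M \<and> (\<exists>ps. length ps = n \<and> chain E M e ps (v y))"
      using M_D by auto
  qed
  finally show ?case .
qed

end



lemma Disjs_map: "holds D I v (Disjs (map f xs)) = (\<exists>x\<in>set xs. holds D I v (f x))"
  by (induction xs) auto

context setting
begin

lemma ins_upd_sem:
  assumes inv: "Inv D s" and sE: "s Edge = G" and uD: "u \<in> D" and wD: "w \<in> D"
    and ac: "acyclic M"
  shows "holds D s (env as [u, w]) (Disjs (map (\<lambda>i. CH \<mu> i (X 0) (X 1)) [0..<Suc K]))
         = ((u, w) \<in> M\<^sup>*)"
proof -
  have vP: "\<forall>i<length as. env as [u, w] (P i) = as ! i" by (simp add: env_def)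
  have ch: "holds D s (env as [u, w]) (CH \<mu> i (X 0) (X 1)) = (\<exists>ps. length ps = i \<and> chain E M u ps w)"
    for i
  proof -
    have a: "X 0 \<notin> V ` {..<2 * i}" "X 1 \<notin> V ` {..<2 * i}" by auto
    have "holds D s (env as [u, w]) (CH \<mu> i (X 0) (X 1)) =
      (\<exists>ps. length ps = i \<and> chain E M (env as [u, w] (X 0)) ps (env as [u, w] (X 1)))"
      by (rule CH_sem[OF inv sE vP a]) (simp_all add: env_def uD wD)
    then show ?thesis by (simp add: env_def)
  qed
  have "holds D s (env as [u, w]) (Disjs (map (\<lambda>i. CH \<mu> i (X 0) (X 1)) [0..<Suc K]))
     = (\<exists>i<Suc K. \<exists>ps. length ps = i \<and> chain E M u ps w)"
    unfolding Disjs_map set_upt ch by auto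
  also have "\<dots> = ((u, w) \<in> M\<^sup>*)"
  proof
    assume "\<exists>i<Suc K. \<exists>ps. length ps = i \<and> chain E M u ps w"
    then show "(u, w) \<in> M\<^sup>*" using chain_path[OF E_sub_M] by blast
  next
    assume "(u, w) \<in> M\<^sup>*"
    from reach_bound[OF ac this] show "\<exists>i<Suc K. \<exists>ps. length ps = i \<and> chain E M u ps w"
      by (metis less_Suc_eq_le)
  qed
  finally show ?thesis .
qed

lemma grd_sem:
  assumes inv: "Inv D s" and sE: "s Edge = G"
  shows "holds D s (env as []) (Ex (V (2 * (K + 2))) (Disjs (map (\<lambda>i. CH \<mu> i (V (2 * (K + 2))) (V (2 * (K + 2)))) [1..<K + 3])))
         = (\<not> acyclic M)"
proof -
  let ?x = "V (2 * (K + 2))"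
  have inner: "holds D s ((env as [])(?x := d)) (Disjs (map (\<lambda>i. CH \<mu> i ?x ?x) [1..<K + 3]))
     = (\<exists>i\<in>{1..<K+3}. \<exists>ps. length ps = i \<and> chain E M d ps d)" if dD: "d \<in> D" for d
  proof -
    let ?v = "(env as [])(?x := d)"
    have vP: "\<forall>i<length as. ?v (P i) = as ! i" by (simp add: env_def)
    have H: "holds D s ?v (CH \<mu> i ?x ?x) = (\<exists>ps. length ps = i \<and> chain E M d ps d)"
      if "i \<in> {1..<K+3}" for i
    proof -
      have xi: "?x \<notin> V ` {..<2 * i}" using that by auto
      have "holds D s ?v (CH \<mu> i ?x ?x) = (\<exists>ps. length ps = i \<and> chain E M (?v ?x) ps (?v ?x))"
        by (rule CH_sem[OF inv sE vP xi xi]) (simp_all add: dD)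
      then show ?thesis by simp
    qed
    show ?thesis unfolding Disjs_map set_upt by (rule bex_cong[OF refl H])
  qed
  have "holds D s (env as []) (Ex ?x (Disjs (map (\<lambda>i. CH \<mu> i ?x ?x) [1..<K + 3])))
     = (\<exists>d\<in>D. \<exists>i\<in>{1..<K+3}. \<exists>ps. length ps = i \<and> chain E M d ps d)"
    unfolding holds.simps by (rule bex_cong[OF refl inner])
  also have "\<dots> = (\<not> acyclic M)"
  proof
    assume "\<exists>d\<in>D. \<exists>i\<in>{1..<K+3}. \<exists>ps. length ps = i \<and> chain E M d ps d"
    then obtain d i ps where "i \<in> {1..<K+3}" "length ps = i" "chain E M d ps d" by blast
    then have "ps \<noteq> []" "chain E M d ps d" by auto
    then have "(d, d) \<in> M\<^sup>+" using chain_path[OF E_sub_M] by blast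
    then show "\<not> acyclic M" by (auto simp: acyclic_def)
  next
    assume "\<not> acyclic M"
    then obtain x where "(x, x) \<in> M\<^sup>+" by (auto simp: acyclic_def)
    from cycle_bound[OF this] obtain x' ps where "x' \<in> D" "ps \<noteq> []" "length ps \<le> K + 2"
      "chain E M x' ps x'" by blast
    then show "\<exists>d\<in>D. \<exists>i\<in>{1..<K+3}. \<exists>ps. length ps = i \<and> chain E M d ps d"
    proof -
      have "length ps \<in> {1..<K+3}" using \<open>ps \<noteq> []\<close> \<open>length ps \<le> K + 2\<close>
        by (cases ps) auto
      then show ?thesis using \<open>x' \<in> D\<close> \<open>chain E M x' ps x'\<close> by blast
    qed
  qed
  finally show ?thesis .
qed

end

lemma apply_change_Some:
  "rule \<rho> = Some \<mu> \<Longrightarrow> edges (apply_change D \<rho> as G) = Mrel D \<mu> as G"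
  by (auto simp: edges_def apply_change_def Mrel_def)

lemma qf_setting:
  assumes "qf_insertion_query \<rho>" "rule \<rho> = Some \<mu>" "length as = nparams \<rho>"
    "\<forall>bs\<in>G. length bs = 2 \<and> set bs \<subseteq> D" "acyclic (edges G)"
  shows "\<exists>\<phi>. setting D G as \<mu> \<phi>"
proof -
  from assms(1,2) obtain \<phi> where "qfree \<phi>" "\<mu> = Disj (Rel Edge [X 0, X 1]) \<phi>"
    "rels \<mu> \<subseteq> {Edge}" "fvars \<mu> \<subseteq> param_vars (nparams \<rho>) \<union> tuple_vars 2"
    by (auto simp: qf_insertion_query_def wf_gquery_def)
  then have "setting D G as \<mu> \<phi>" using assms(3-5) by unfold_locales auto
  then show ?thesis by blast
qed

lemma apply_change_wf:
  "\<forall>bs\<in>G. length bs = 2 \<and> set bs \<subseteq> D \<Longrightarrow> \<forall>bs\<in>apply_change D \<rho> as G. length bs = 2 \<and> set bs \<subseteq> D"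
  by (auto simp: apply_change_def split: option.splits)



lemma del_graph:
  assumes ac: "acyclic E" and ED: "E \<subseteq> D \<times> D"
  shows "(x, y) \<in> (E - {(a, b)})\<^sup>* \<longleftrightarrow> (x, y) \<in> E\<^sup>* \<and> ((a, b) \<notin> E \<or> (x, a) \<notin> E\<^sup>* \<or> (b, y) \<notin> E\<^sup>* \<or>
      (\<exists>u\<in>D. \<exists>w\<in>D. (x, u) \<in> E\<^sup>* \<and> (u, w) \<in> E \<and> \<not> (u = a \<and> w = b) \<and> (u, a) \<in> E\<^sup>* \<and>
         (w, a) \<notin> E\<^sup>* \<and> (w, y) \<in> E\<^sup>*))"
    (is "?L \<longleftrightarrow> ?R")
proof
  have sub: "(E - {(a, b)})\<^sup>* \<subseteq> E\<^sup>*" by (rule rtrancl_mono) blast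
  assume L: ?L
  have gen: "(x, a) \<in> E\<^sup>* \<longrightarrow> (z, a) \<in> E\<^sup>* \<or>
      (\<exists>u w. (x, u) \<in> E\<^sup>* \<and> (u, w) \<in> E \<and> \<not> (u = a \<and> w = b) \<and> (u, a) \<in> E\<^sup>* \<and>
         (w, a) \<notin> E\<^sup>* \<and> (w, z) \<in> E\<^sup>*)" if "(x, z) \<in> (E - {(a, b)})\<^sup>*" for z
    using that
  proof (induction rule: rtrancl_induct)
    case base then show ?case by simp
  next
    case (step y z)
    have xy: "(x, y) \<in> E\<^sup>*" using step.hyps(1) sub by blast
    have yz: "(y, z) \<in> E" "\<not> (y = a \<and> z = b)" using step.hyps(2) by auto
    show ?case
    proof
      assume xa: "(x, a) \<in> E\<^sup>*"
      from step.IH xa consider "(y, a) \<in> E\<^sup>*" | u w where "(x, u) \<in> E\<^sup>*" "(u, w) \<in> E"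
        "\<not> (u = a \<and> w = b)" "(u, a) \<in> E\<^sup>*" "(w, a) \<notin> E\<^sup>*" "(w, y) \<in> E\<^sup>*" by blast
      then show "(z, a) \<in> E\<^sup>* \<or> (\<exists>u w. (x, u) \<in> E\<^sup>* \<and> (u, w) \<in> E \<and> \<not> (u = a \<and> w = b) \<and>
         (u, a) \<in> E\<^sup>* \<and> (w, a) \<notin> E\<^sup>* \<and> (w, z) \<in> E\<^sup>*)"
      proof cases
        case 1
        show ?thesis
        proof (cases "(z, a) \<in> E\<^sup>*")
          case False
          have "(z, z) \<in> E\<^sup>*" by simp
          then show ?thesis using xy yz 1 False by blast
        qed simp
      next
        case 2
        then have "(w, z) \<in> E\<^sup>*" using yz(1) by (meson rtrancl.rtrancl_into_rtrancl)
        then show ?thesis using 2 by blast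
      qed
    qed
  qed
  show ?R
  proof -
    have "(x, y) \<in> E\<^sup>*" using L sub by blast
    moreover have "(a, b) \<notin> E \<or> (x, a) \<notin> E\<^sup>* \<or> (b, y) \<notin> E\<^sup>* \<or>
      (\<exists>u\<in>D. \<exists>w\<in>D. (x, u) \<in> E\<^sup>* \<and> (u, w) \<in> E \<and> \<not> (u = a \<and> w = b) \<and> (u, a) \<in> E\<^sup>* \<and>
         (w, a) \<notin> E\<^sup>* \<and> (w, y) \<in> E\<^sup>*)"
    proof (cases "(a, b) \<in> E \<and> (x, a) \<in> E\<^sup>* \<and> (b, y) \<in> E\<^sup>*")
      case True
      from gen[OF L] True consider "(y, a) \<in> E\<^sup>*" | u w where "(x, u) \<in> E\<^sup>*" "(u, w) \<in> E"
        "\<not> (u = a \<and> w = b)" "(u, a) \<in> E\<^sup>*" "(w, a) \<notin> E\<^sup>*" "(w, y) \<in> E\<^sup>*" by blast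
      then show ?thesis
      proof cases
        case 1
        have "(b, a) \<in> E\<^sup>*" using True 1 by (meson rtrancl_trans)
        then have "(a, a) \<in> E\<^sup>+" using True by (meson rtrancl_into_trancl2)
        then show ?thesis using ac by (auto simp: acyclic_def)
      next
        case 2
        then have "u \<in> D" "w \<in> D" using ED by auto
        then show ?thesis using 2 by blast
      qed
    next
      case False
      then show ?thesis by blast
    qed
    ultimately show ?R by blast
  qed
next
  have lem: "(x, z) \<in> (E - {(a, b)})\<^sup>* \<or> ((x, a) \<in> E\<^sup>* \<and> (b, z) \<in> E\<^sup>*)" if "(x, z) \<in> E\<^sup>*" for x z
    using that
  proof (induction rule: rtrancl_induct)
    case base then show ?case by simp
  next
    case (step y z)
    show ?case
    proof (cases "(y, z) = (a, b)")
      case True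
      then have "(x, a) \<in> E\<^sup>*" "(b, z) \<in> E\<^sup>*" using step.hyps(1) by auto
      then show ?thesis by blast
    next
      case False
      then have yz: "(y, z) \<in> E - {(a, b)}" using step.hyps(2) by auto
      from step.IH show ?thesis
      proof
        assume "(x, y) \<in> (E - {(a, b)})\<^sup>*"
        then show ?thesis using yz by (meson rtrancl.rtrancl_into_rtrancl)
      next
        assume "(x, a) \<in> E\<^sup>* \<and> (b, y) \<in> E\<^sup>*"
        then show ?thesis using step.hyps(2) by (meson rtrancl.rtrancl_into_rtrancl)
      qed
    qed
  qed
  assume R: ?R
  then have xy: "(x, y) \<in> E\<^sup>*" by blast
  show ?L
  proof (cases "(a, b) \<in> E")
    case False
    then have "E - {(a, b)} = E" by blast
    then show ?thesis using xy by simp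
  next
    case ab: True
    show ?thesis
    proof (cases "(x, a) \<in> E\<^sup>* \<and> (b, y) \<in> E\<^sup>*")
      case False
      then show ?thesis using lem[OF xy] by blast
    next
      case True
      with R ab obtain u w where uw: "(x, u) \<in> E\<^sup>*" "(u, w) \<in> E" "\<not> (u = a \<and> w = b)"
        "(u, a) \<in> E\<^sup>*" "(w, a) \<notin> E\<^sup>*" "(w, y) \<in> E\<^sup>*" by blast
      have 1: "(x, u) \<in> (E - {(a, b)})\<^sup>*"
      proof -
        { assume "(b, u) \<in> E\<^sup>*"
          then have "(b, a) \<in> E\<^sup>*" using uw(4) by (meson rtrancl_trans)
          then have "(a, a) \<in> E\<^sup>+" using ab by (meson rtrancl_into_trancl2)
          then have False using ac by (auto simp: acyclic_def) }
        then show ?thesis using lem[OF uw(1)] by blast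
      qed
      have 2: "(w, y) \<in> (E - {(a, b)})\<^sup>*" using lem[OF uw(6)] uw(5) by blast
      have 3: "(u, w) \<in> E - {(a, b)}" using uw(2,3) by auto
      show ?thesis using 1 2 3 by (meson rtrancl_trans r_into_rtrancl)
    qed
  qed
qed



definition DELf :: "(sym, var) fm" where
  "DELf = Conj (Rst (X 0) (X 1)) (Disj (Neg (Rel Edge [P 0, P 1])) (Disj (Neg (Rst (X 0) (P 0)))
     (Disj (Neg (Rst (P 1) (X 1))) (Ex (V 0) (Ex (V 1) (Conj (Rst (X 0) (V 0))
       (Conj (Rel Edge [V 0, V 1]) (Conj (Neg (Conj (Eq (V 0) (P 0)) (Eq (V 1) (P 1))))
         (Conj (Rst (V 0) (P 0)) (Conj (Neg (Rst (V 1) (P 0))) (Rst (V 1) (X 1))))))))))))"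

definition UPD :: "gquery \<Rightarrow> (sym, var) fm" where
  "UPD \<rho> = (if \<rho> = del_E then DELf else (case rule \<rho> of None \<Rightarrow> Rst (X 0) (X 1)
     | Some \<mu> \<Rightarrow> Disjs (map (\<lambda>i. CH \<mu> i (X 0) (X 1)) [0..<Suc (Kb (nparams \<rho>))])))"

definition GRD :: "gquery \<Rightarrow> (sym, var) fm" where
  "GRD \<rho> = (case rule \<rho> of None \<Rightarrow> FF
     | Some \<mu> \<Rightarrow> Ex (V (2 * (Kb (nparams \<rho>) + 2)))
         (Disjs (map (\<lambda>i. CH \<mu> i (V (2 * (Kb (nparams \<rho>) + 2))) (V (2 * (Kb (nparams \<rho>) + 2))))
            [1..<Kb (nparams \<rho>) + 3])))"

definition Prog :: dprog where
  "Prog = \<lparr>auxs = {0}, ar = (\<lambda>_. 2), qsym = 0, upd = (\<lambda>\<rho> T. UPD \<rho>)\<rparr>"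

lemma DELf_sem:
  assumes inv: "Inv D s" and sE: "s Edge = G" and xD: "x \<in> D" and yD: "y \<in> D"
    and aD: "as ! 0 \<in> D" and bD: "as ! 1 \<in> D"
  shows "holds D s (env as [x, y]) DELf = ((x, y) \<in> (edges G)\<^sup>* \<and> ((as ! 0, as ! 1) \<notin> edges G \<or>
      (x, as ! 0) \<notin> (edges G)\<^sup>* \<or> (as ! 1, y) \<notin> (edges G)\<^sup>* \<or>
      (\<exists>u\<in>D. \<exists>w\<in>D. (x, u) \<in> (edges G)\<^sup>* \<and> (u, w) \<in> edges G \<and> \<not> (u = as ! 0 \<and> w = as ! 1) \<and>
         (u, as ! 0) \<in> (edges G)\<^sup>* \<and> (w, as ! 0) \<notin> (edges G)\<^sup>* \<and> (w, y) \<in> (edges G)\<^sup>*)))"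
proof -
  define v where "v = env as [x, y]"
  have vv: "v (X 0) = x" "v (X 1) = y" "v (P 0) = as ! 0" "v (P 1) = as ! 1"
    "v (X (Suc 0)) = y" "v (P (Suc 0)) = as ! 1"
    by (simp_all add: v_def env_def)
  have R: "holds D s v' (Rst p q) = ((v' p, v' q) \<in> (edges G)\<^sup>*)" if "v' p \<in> D" "v' q \<in> D" for v' p q
    using Rst_sem[OF inv that] sE by simp
  have inner: "holds D s (v(V 0 := d, V 1 := e)) (Conj (Rst (X 0) (V 0))
       (Conj (Rel Edge [V 0, V 1]) (Conj (Neg (Conj (Eq (V 0) (P 0)) (Eq (V 1) (P 1))))
         (Conj (Rst (V 0) (P 0)) (Conj (Neg (Rst (V 1) (P 0))) (Rst (V 1) (X 1)))))))
     = ((x, d) \<in> (edges G)\<^sup>* \<and> (d, e) \<in> edges G \<and> \<not> (d = as ! 0 \<and> e = as ! 1) \<and>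
         (d, as ! 0) \<in> (edges G)\<^sup>* \<and> (e, as ! 0) \<notin> (edges G)\<^sup>* \<and> (e, y) \<in> (edges G)\<^sup>*)"
    if dD: "d \<in> D" and eD: "e \<in> D" for d e
    using dD eD xD yD aD bD by (simp add: R vv sE edges_def)
  have "holds D s v DELf = ((x, y) \<in> (edges G)\<^sup>* \<and> ((as ! 0, as ! 1) \<notin> edges G \<or>
      (x, as ! 0) \<notin> (edges G)\<^sup>* \<or> (as ! 1, y) \<notin> (edges G)\<^sup>* \<or>
      (\<exists>u\<in>D. \<exists>w\<in>D. (x, u) \<in> (edges G)\<^sup>* \<and> (u, w) \<in> edges G \<and> \<not> (u = as ! 0 \<and> w = as ! 1) \<and>
         (u, as ! 0) \<in> (edges G)\<^sup>* \<and> (w, as ! 0) \<notin> (edges G)\<^sup>* \<and> (w, y) \<in> (edges G)\<^sup>*)))"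
  proof -
    have ex: "holds D s v (Ex (V 0) (Ex (V 1) (Conj (Rst (X 0) (V 0))
       (Conj (Rel Edge [V 0, V 1]) (Conj (Neg (Conj (Eq (V 0) (P 0)) (Eq (V 1) (P 1))))
         (Conj (Rst (V 0) (P 0)) (Conj (Neg (Rst (V 1) (P 0))) (Rst (V 1) (X 1)))))))))
      = (\<exists>u\<in>D. \<exists>w\<in>D. (x, u) \<in> (edges G)\<^sup>* \<and> (u, w) \<in> edges G \<and> \<not> (u = as ! 0 \<and> w = as ! 1) \<and>
         (u, as ! 0) \<in> (edges G)\<^sup>* \<and> (w, as ! 0) \<notin> (edges G)\<^sup>* \<and> (w, y) \<in> (edges G)\<^sup>*)"
      unfolding holds.simps(6) fun_upd_def[symmetric]
      by (intro bex_cong refl) (rule inner)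
    show ?thesis unfolding DELf_def holds.simps(4,5,3) ex[unfolded DELf_def]
      using xD yD aD bD by (simp add: R vv sE edges_def)
  qed
  then show ?thesis by (simp add: v_def)
qed



lemma del_E_ne_ins: "ins_E \<noteq> del_E"
  by (simp add: ins_E_def del_E_def)

lemma qf_ins_E: "qf_insertion_query ins_E"
  by (auto simp: qf_insertion_query_def wf_gquery_def ins_E_def param_vars_def tuple_vars_def)

lemma edges_del:
  assumes Gwf: "\<forall>bs\<in>G. length bs = 2 \<and> set bs \<subseteq> D"
  shows "edges (apply_change D del_E as G) = edges G - {(as ! 0, as ! 1)}"
  using Gwf by (auto simp: edges_def apply_change_def del_E_def env_def)

lemma edges_sub_D: "\<forall>bs\<in>G. length bs = 2 \<and> set bs \<subseteq> D \<Longrightarrow> edges G \<subseteq> D \<times> D"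
  by (auto simp: edges_def)

lemma upd_correct:
  assumes inv: "Inv D s" and sE: "s Edge = G" and Gwf: "\<forall>bs\<in>G. length bs = 2 \<and> set bs \<subseteq> D"
    and acG: "acyclic (edges G)"
    and r: "\<rho> = del_E \<or> qf_insertion_query \<rho>" and las: "length as = nparams \<rho>" and asD: "set as \<subseteq> D"
    and acG': "acyclic (edges (apply_change D \<rho> as G))"
    and uD: "u \<in> D" and wD: "w \<in> D"
  shows "holds D s (env as [u, w]) (UPD \<rho>) = ((u, w) \<in> (edges (apply_change D \<rho> as G))\<^sup>*)"
proof (cases "\<rho> = del_E")
  case True
  then have l2: "length as = 2" using las by (simp add: del_E_def)
  then have ab: "as ! 0 \<in> D" "as ! 1 \<in> D" using asD nth_mem[of 0 as] nth_mem[of 1 as] by auto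
  have "holds D s (env as [u, w]) (UPD \<rho>) = holds D s (env as [u, w]) DELf"
    using True by (simp add: UPD_def)
  also have "\<dots> = ((u, w) \<in> (edges G - {(as ! 0, as ! 1)})\<^sup>*)"
    using DELf_sem[OF inv sE uD wD ab] del_graph[OF acG edges_sub_D[OF Gwf]] by simp
  also have "\<dots> = ((u, w) \<in> (edges (apply_change D \<rho> as G))\<^sup>*)"
    using True edges_del[OF Gwf] by simp
  finally show ?thesis .
next
  case False
  then have qfr: "qf_insertion_query \<rho>" using r by simp
  show ?thesis
  proof (cases "rule \<rho>")
    case None
    then show ?thesis using False Rst_sem[OF inv, of "env as [u, w]" "X 0" "X 1"] uD wD sE
      by (simp add: UPD_def apply_change_def env_def)
  next
    case (Some \<mu>)
    obtain \<phi> where st: "setting D G as \<mu> \<phi>" using qf_setting[OF qfr Some las Gwf acG] by blast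
    have M: "edges (apply_change D \<rho> as G) = Mrel D \<mu> as G" using apply_change_Some[OF Some] .
    have "holds D s (env as [u, w]) (UPD \<rho>)
        = holds D s (env as [u, w]) (Disjs (map (\<lambda>i. CH \<mu> i (X 0) (X 1)) [0..<Suc (Kb (length as))]))"
      using False Some las by (simp add: UPD_def)
    also have "\<dots> = ((u, w) \<in> (Mrel D \<mu> as G)\<^sup>*)"
      using setting.ins_upd_sem[OF st inv sE uD wD] acG' M by simp
    finally show ?thesis using M by simp
  qed
qed

lemma grd_correct:
  assumes inv: "Inv D s" and sE: "s Edge = G" and Gwf: "\<forall>bs\<in>G. length bs = 2 \<and> set bs \<subseteq> D"
    and acG: "acyclic (edges G)"
    and qfr: "qf_insertion_query \<rho>" and las: "length as = nparams \<rho>"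
  shows "holds D s (env as []) (GRD \<rho>) = (\<not> acyclic (edges (apply_change D \<rho> as G)))"
proof (cases "rule \<rho>")
  case None
  then show ?thesis using acG by (simp add: GRD_def apply_change_def)
next
  case (Some \<mu>)
  obtain \<phi> where st: "setting D G as \<mu> \<phi>" using qf_setting[OF qfr Some las Gwf acG] by blast
  have M: "edges (apply_change D \<rho> as G) = Mrel D \<mu> as G" using apply_change_Some[OF Some] .
  show ?thesis using setting.grd_sem[OF st inv sE] Some las M by (simp add: GRD_def)
qed

lemma step_correct:
  assumes inv: "Inv D s" and sE: "s Edge = G" and Gwf: "\<forall>bs\<in>G. length bs = 2 \<and> set bs \<subseteq> D"
    and acG: "acyclic (edges G)"
    and r: "\<rho> = del_E \<or> qf_insertion_query \<rho>" and las: "length as = nparams \<rho>" and asD: "set as \<subseteq> D"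
    and acG': "acyclic (edges (apply_change D \<rho> as G))"
  shows "step D Prog (\<rho>, as) s Edge = apply_change D \<rho> as G
    \<and> step D Prog (\<rho>, as) s (Aux 0) = reach D (apply_change D \<rho> as G)
    \<and> Inv D (step D Prog (\<rho>, as) s)"
proof -
  let ?G' = "apply_change D \<rho> as G"
  have e: "step D Prog (\<rho>, as) s Edge = ?G'" using sE by (simp add: step_def)
  have a: "step D Prog (\<rho>, as) s (Aux 0) =
      {bs. length bs = 2 \<and> set bs \<subseteq> D \<and> holds D s (env as bs) (UPD \<rho>)}"
    by (simp add: step_def Prog_def)
  have U: "holds D s (env as [u, w]) (UPD \<rho>) = ((u, w) \<in> (edges ?G')\<^sup>*)" if "u \<in> D" "w \<in> D" for u w
    by (rule upd_correct[OF inv sE Gwf acG r las asD acG' that])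
  have len2: "length bs = 2 \<longleftrightarrow> (\<exists>u w. bs = [u, w])" for bs :: "nat list"
    by (auto simp: length_Suc_conv numeral_2_eq_2)
  have r2: "step D Prog (\<rho>, as) s (Aux 0) = reach D ?G'"
  proof -
    have "{bs. length bs = 2 \<and> set bs \<subseteq> D \<and> holds D s (env as bs) (UPD \<rho>)} = reach D ?G'"
    proof (rule set_eqI)
      fix bs
      show "bs \<in> {bs. length bs = 2 \<and> set bs \<subseteq> D \<and> holds D s (env as bs) (UPD \<rho>)} \<longleftrightarrow> bs \<in> reach D ?G'"
      proof (cases "length bs = 2")
        case True
        then obtain u w where bs: "bs = [u, w]" using len2 by blast
        show ?thesis
        proof (cases "u \<in> D \<and> w \<in> D")
          case True
          then show ?thesis using U bs by (simp add: reach_def)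
        next
          case False
          then show ?thesis using bs by (auto simp: reach_def)
        qed
      next
        case False
        then show ?thesis by (auto simp: reach_def)
      qed
    qed
    then show ?thesis using a by simp
  qed
  have "Inv D (step D Prog (\<rho>, as) s)"
    unfolding Inv_def
  proof (intro ballI)
    fix u w assume "u \<in> D" "w \<in> D"
    then show "(u = w \<or> [u, w] \<in> step D Prog (\<rho>, as) s (Aux 0)) =
        ((u, w) \<in> (edges (step D Prog (\<rho>, as) s Edge))\<^sup>*)"
      using r2 e by (auto simp: reach_def)
  qed
  then show ?thesis using e r2 by simp
qed

lemma inputs_snoc: "inputs D (cs @ [(\<rho>, as)]) = apply_change D \<rho> as (inputs D cs)"
  by (simp add: inputs_def)

lemma run_snoc: "run D \<Pi> (cs @ [c]) = step D \<Pi> c (run D \<Pi> cs)"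
  by (simp add: run_def)

lemma inputs_wf: "\<forall>bs\<in>inputs D cs. length bs = 2 \<and> set bs \<subseteq> D"
proof (induction cs rule: rev_induct)
  case Nil
  then show ?case by (simp add: inputs_def)
next
  case (snoc c cs)
  obtain \<rho> as where c: "c = (\<rho>, as)" by (cases c)
  show ?case using apply_change_wf[OF snoc.IH] c inputs_snoc by metis
qed

lemma valid_snoc:
  assumes "valid_seq D \<Delta> (cs @ [(\<rho>, as)])"
  shows "valid_seq D \<Delta> cs \<and> \<rho> \<in> \<Delta> \<and> length as = nparams \<rho> \<and> set as \<subseteq> D \<and>
    acyclic (edges (inputs D cs)) \<and> acyclic (edges (inputs D (cs @ [(\<rho>, as)])))"
proof -
  from assms have a: "\<forall>(\<rho>, as)\<in>set (cs @ [(\<rho>, as)]). \<rho> \<in> \<Delta> \<and> length as = nparams \<rho> \<and> set as \<subseteq> D"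
    and b: "\<forall>n\<le>length (cs @ [(\<rho>, as)]). acyclic (edges (inputs D (take n (cs @ [(\<rho>, as)]))))"
    by (auto simp: valid_seq_def)
  have "\<forall>n\<le>length cs. acyclic (edges (inputs D (take n cs)))"
  proof (intro allI impI)
    fix n assume "n \<le> length cs"
    then show "acyclic (edges (inputs D (take n cs)))" using b[rule_format, of n] by simp
  qed
  moreover have "acyclic (edges (inputs D cs))" using b[rule_format, of "length cs"] by simp
  moreover have "acyclic (edges (inputs D (cs @ [(\<rho>, as)])))"
    using b[rule_format, of "length cs + 1"] by simp
  ultimately show ?thesis using a by (auto simp: valid_seq_def)
qed

lemma run_correct:
  assumes H: "\<forall>\<rho>\<in>\<Delta>. \<rho> = del_E \<or> qf_insertion_query \<rho>"
  shows "valid_seq D \<Delta> cs \<Longrightarrow> run D Prog cs Edge = inputs D cs \<and> Inv D (run D Prog cs) \<and>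
     (cs \<noteq> [] \<longrightarrow> run D Prog cs (Aux 0) = reach D (inputs D cs))"
proof (induction cs rule: rev_induct)
  case Nil
  show ?case by (simp add: run_def inputs_def Inv_def edges_def)
next
  case (snoc c cs)
  obtain \<rho> as where c: "c = (\<rho>, as)" by (cases c)
  from valid_snoc[OF snoc.prems[unfolded c]] have v: "valid_seq D \<Delta> cs" "\<rho> \<in> \<Delta>"
    "length as = nparams \<rho>" "set as \<subseteq> D" "acyclic (edges (inputs D cs))"
    "acyclic (edges (inputs D (cs @ [(\<rho>, as)])))" by auto
  from snoc.IH[OF v(1)] have ih: "run D Prog cs Edge = inputs D cs" "Inv D (run D Prog cs)" by auto
  have r: "\<rho> = del_E \<or> qf_insertion_query \<rho>" using H v(2) by blast
  have ac': "acyclic (edges (apply_change D \<rho> as (inputs D cs)))" using v(6) inputs_snoc by metis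
  note st = step_correct[OF ih(2) ih(1) inputs_wf v(5) r v(3) v(4) ac']
  show ?case using st c run_snoc inputs_snoc by metis
qed



lemma qf_facts:
  assumes "qf_insertion_query \<rho>" "rule \<rho> = Some \<mu>"
  shows "qfree \<mu> \<and> rels \<mu> \<subseteq> {Edge} \<and> fvars \<mu> \<subseteq> param_vars (nparams \<rho>) \<union> tuple_vars 2"
  using assms by (auto simp: qf_insertion_query_def wf_gquery_def)

lemma UPD_fo:
  assumes r: "\<rho> = del_E \<or> qf_insertion_query \<rho>"
  shows "fo_over Prog (param_vars (nparams \<rho>) \<union> tuple_vars 2) (UPD \<rho>)"
proof (cases "\<rho> = del_E")
  case True
  then show ?thesis
    by (auto simp: fo_over_def UPD_def DELf_def Rst_def Prog_def del_E_def param_vars_def tuple_vars_def)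
next
  case False
  then have qfr: "qf_insertion_query \<rho>" using r by simp
  have X: "X 0 \<in> tuple_vars 2" "X 1 \<in> tuple_vars 2" by (auto simp: tuple_vars_def)
  show ?thesis
  proof (cases "rule \<rho>")
    case None
    then show ?thesis using False X by (auto simp: fo_over_def UPD_def Prog_def Rst_def)
  next
    case (Some \<mu>)
    note f = qf_facts[OF qfr Some]
    let ?fs = "map (\<lambda>i. CH \<mu> i (X 0) (X 1)) [0..<Suc (Kb (nparams \<rho>))]"
    have U: "UPD \<rho> = Disjs ?fs" using False Some by (simp add: UPD_def)
    have fv: "fvars (Disjs ?fs) \<subseteq> param_vars (nparams \<rho>) \<union> tuple_vars 2"
    proof -
      have "\<forall>f\<in>set ?fs. fvars f \<subseteq> param_vars (nparams \<rho>) \<union> tuple_vars 2"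
        using fvars_CH[of \<mu> "nparams \<rho>"] f X by fastforce
      then show ?thesis using fvars_Disjs[of ?fs] by blast
    qed
    have rl: "rels (Disjs ?fs) \<subseteq> insert Edge (Aux ` auxs Prog)"
    proof -
      have "\<forall>f\<in>set ?fs. rels f \<subseteq> insert Edge (Aux ` auxs Prog)"
        using rels_CH[of \<mu>] f by (fastforce simp: Prog_def)
      then show ?thesis using rels_Disjs[of ?fs] by blast
    qed
    show ?thesis using U fv rl by (simp add: fo_over_def)
  qed
qed

lemma GRD_fo:
  assumes qfr: "qf_insertion_query \<rho>"
  shows "fo_over Prog (param_vars (nparams \<rho>)) (GRD \<rho>)"
proof (cases "rule \<rho>")
  case None
  then show ?thesis by (simp add: fo_over_def GRD_def FF_def)
next
  case (Some \<mu>)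
  note f = qf_facts[OF qfr Some]
  let ?x = "V (2 * (Kb (nparams \<rho>) + 2))"
  let ?fs = "map (\<lambda>i. CH \<mu> i ?x ?x) [1..<Kb (nparams \<rho>) + 3]"
  have U: "GRD \<rho> = Ex ?x (Disjs ?fs)" using Some by (simp add: GRD_def)
  have fv: "fvars (Disjs ?fs) \<subseteq> insert ?x (param_vars (nparams \<rho>))"
  proof -
    have "\<forall>f\<in>set ?fs. fvars f \<subseteq> insert ?x (param_vars (nparams \<rho>))"
      using fvars_CH[of \<mu> "nparams \<rho>"] f by fastforce
    then show ?thesis using fvars_Disjs[of ?fs] by blast
  qed
  have rl: "rels (Disjs ?fs) \<subseteq> insert Edge (Aux ` auxs Prog)"
  proof -
    have "\<forall>f\<in>set ?fs. rels f \<subseteq> insert Edge (Aux ` auxs Prog)"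
      using rels_CH[of \<mu>] f by (fastforce simp: Prog_def)
    then show ?thesis using rels_Disjs[of ?fs] by blast
  qed
  show ?thesis using U fv rl by (auto simp: fo_over_def)
qed

theorem theorem4p3:
  fixes \<Delta> :: "gquery set"
  assumes "finite \<Delta>"
    and "\<forall>\<rho>\<in>\<Delta>. qf_insertion_query \<rho>"
  shows "\<exists>\<Pi> \<gamma>. maintains_reach_dag (\<Delta> \<union> Delta_E) \<Pi> \<and>
           (\<forall>\<rho>\<in>\<Delta>. correct_guard (\<Delta> \<union> Delta_E) \<Pi> \<rho> (\<gamma> \<rho>))"
proof (intro exI conjI)
  have H: "\<forall>\<rho>\<in>\<Delta> \<union> Delta_E. \<rho> = del_E \<or> qf_insertion_query \<rho>"
    using assms(2) qf_ins_E by (auto simp: Delta_E_def)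
  show "maintains_reach_dag (\<Delta> \<union> Delta_E) Prog"
    unfolding maintains_reach_dag_def
  proof (intro conjI allI impI)
    show "wf_dprog (\<Delta> \<union> Delta_E) Prog"
      unfolding wf_dprog_def using H UPD_fo by (simp add: Prog_def)
  next
    fix D :: "nat set" and cs
    assume "finite D" "cs \<noteq> []" "valid_seq D (\<Delta> \<union> Delta_E) cs"
    then show "run D Prog cs (Aux (qsym Prog)) = reach D (inputs D cs)"
      using run_correct[OF H] by (simp add: Prog_def)
  qed
  show "\<forall>\<rho>\<in>\<Delta>. correct_guard (\<Delta> \<union> Delta_E) Prog \<rho> (GRD \<rho>)"
  proof
    fix \<rho> assume r: "\<rho> \<in> \<Delta>"
    then have qfr: "qf_insertion_query \<rho>" using assms(2) by blast
    show "correct_guard (\<Delta> \<union> Delta_E) Prog \<rho> (GRD \<rho>)"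
      unfolding correct_guard_def
    proof (intro conjI allI impI)
      show "fo_over Prog (param_vars (nparams \<rho>)) (GRD \<rho>)" by (rule GRD_fo[OF qfr])
    next
      fix D :: "nat set" and cs and as :: "nat list"
      assume a: "finite D" "cs \<noteq> []" "valid_seq D (\<Delta> \<union> Delta_E) cs" "length as = nparams \<rho>"
        "set as \<subseteq> D"
      have rc: "run D Prog cs Edge = inputs D cs" "Inv D (run D Prog cs)"
        using run_correct[OF H a(3)] by auto
      have ac: "acyclic (edges (inputs D cs))"
        using a(3) unfolding valid_seq_def by (metis order_refl take_all)
      show "holds D (run D Prog cs) (env as []) (GRD \<rho>) =
          (\<not> acyclic (edges (apply_change D \<rho> as (inputs D cs))))"
        by (rule grd_correct[OF rc(2) rc(1) inputs_wf ac qfr a(4)])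
    qed
  qed
qed


end
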